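(* In any finite ELP, for any policy $\pi$, $Q^*$ is an optimal solution of the problem: maximize $\mathbb E_\pi[Q(S_T,A_T)]$ over $Q\in\mathcal Q$ subject to $Q(s,a)\le\mathcal BQ(s,a)$ for all $(s,a)$. Equivalently, $Q^*\in\arg\max_{Q\in\mathcal Q}\min_{\lambda\ge0}\mathcal L_\pi(Q,\lambda)$.
   Context: A finite ELP is $(\mathcal S,\mathcal A,P,R,\rho)$ with finite $\mathcal S,\mathcal A$, reward $R:\mathcal S\to\mathbb R$, transitions $P(s'|s,a)$, distribution $\rho$, and nonempty terminal set $\mathcal S_\bot$. Under a policy $\pi$, $S_0$ is a fixed terminal state, $A_t\sim\pi(\cdot|S_t)$, $S_{t+1}\sim P(\cdot|S_t,A_t)$, and $T=\inf\{t\ge1:S_t\in\mathcal S_\bot\}$. ELP conditions: $\mathbb E_\pi[T]<\infty$ for every $\pi$; $P(s'|s,a)=\rho(s')$ for all $s\in\mathcal S_\bot$, all $a,s'$; every state is reachable under some policy. $\mathcal Q$ = all functions $\mathcal S\times\mathcal A\to\mathbb R$; $\lambda\ge0$ ranges over functions $\mathcal S\times\mathcal A\to[0,\infty)$. $\mathcal BQ(s,a)=\sum_{s'}P(s'|s,a)\big(R(s')+\mathbf 1[s'\notin\mathcal S_\bot]\max_{a'}Q(s',a')\big)$, with unique fixed point $Q^*$. $\mathcal L_\pi(Q,\lambda)=\mathbb E_\pi[Q(S_T,A_T)]+\sum_{s,a}\lambda(s,a)(\mathcal BQ(s,a)-Q(s,a))$ with $A_T\sim\pi(\cdot|S_T)$.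 *)

theory Defs
  imports "HOL-Analysis.Analysis"
begin

text \<open>A finite episodic learning problem (ELP). Transition kernel P s a s' = P(s'|s,a), reward R, distribution rho,
terminal set Sbot, fixed initial terminal state s0.\<close>

definition is_distr :: "('x::finite \<Rightarrow> real) \<Rightarrow> bool" where
  "is_distr p \<longleftrightarrow> (\<forall>x. 0 \<le> p x) \<and> (\<Sum>x\<in>UNIV. p x) = 1"

definition is_kernel :: "('s::finite \<Rightarrow> 'a::finite \<Rightarrow> 's \<Rightarrow> real) \<Rightarrow> bool" where
  "is_kernel P \<longleftrightarrow> (\<forall>s a. is_distr (P s a))"

text \<open>Stationary Markov (stochastic) policy: \<pi> s a = \<pi>(a|s).\<close>
definition is_policy :: "('s::finite \<Rightarrow> 'a::finite \<Rightarrow> real) \<Rightarrow> bool" where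
  "is_policy \<pi> \<longleftrightarrow> (\<forall>s. is_distr (\<pi> s))"

text \<open>occ P Sbot s0 \<pi> t s = Pr_pi(S_(t+1) = s and T \<ge> t+1), i.e. the probability of
being in state s at time t+1 without having hit a terminal state at times 1..t.\<close>
fun occ :: "('s::finite \<Rightarrow> 'a::finite \<Rightarrow> 's \<Rightarrow> real) \<Rightarrow> 's set \<Rightarrow> 's \<Rightarrow>
    ('s \<Rightarrow> 'a \<Rightarrow> real) \<Rightarrow> nat \<Rightarrow> 's \<Rightarrow> real" where
  "occ P Sbot s0 \<pi> 0 s' = (\<Sum>a\<in>UNIV. \<pi> s0 a * P s0 a s')"
| "occ P Sbot s0 \<pi> (Suc t) s' =
     (\<Sum>s\<in>-Sbot. \<Sum>a\<in>UNIV. occ P Sbot s0 \<pi> t s * \<pi> s a * P s a s')"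

text \<open>E_pi[T] = sum_(t \<ge> 1) Pr(T \<ge> t) = sum_(t\<ge>0) sum_s occ t s.\<close>
definition finite_expected_T where
  "finite_expected_T P Sbot s0 \<pi> \<longleftrightarrow> summable (\<lambda>t. \<Sum>s\<in>UNIV. occ P Sbot s0 \<pi> t s)"

text \<open>Pr_pi(S_T = s) for terminal s.\<close>
definition hit_prob where
  "hit_prob P Sbot s0 \<pi> s = (\<Sum>t. occ P Sbot s0 \<pi> t s)"

text \<open>E_pi[Q(S_T, A_T)] with A_T ~ \<pi>(.|S_T).\<close>
definition terminal_value where
  "terminal_value P Sbot s0 \<pi> Q =
     (\<Sum>s\<in>Sbot. hit_prob P Sbot s0 \<pi> s * (\<Sum>a\<in>UNIV. \<pi> s a * Q s a))"

definition reachable where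
  "reachable P Sbot s0 s \<longleftrightarrow> s = s0 \<or> (\<exists>\<pi> t. is_policy \<pi> \<and> occ P Sbot s0 \<pi> t s > 0)"

definition ELP :: "('s::finite \<Rightarrow> 'a::finite \<Rightarrow> 's \<Rightarrow> real) \<Rightarrow> ('s \<Rightarrow> real) \<Rightarrow> ('s \<Rightarrow> real)
    \<Rightarrow> 's set \<Rightarrow> 's \<Rightarrow> bool" where
  "ELP P R rho Sbot s0 \<longleftrightarrow>
     is_kernel P \<and> is_distr rho \<and> Sbot \<noteq> {} \<and> s0 \<in> Sbot \<and>
     (\<forall>\<pi>. is_policy \<pi> \<longrightarrow> finite_expected_T P Sbot s0 \<pi>) \<and>
     (\<forall>s\<in>Sbot. \<forall>a s'. P s a s' = rho s') \<and>
     (\<forall>s. reachable P Sbot s0 s)"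

definition bellman :: "('s::finite \<Rightarrow> 'a::finite \<Rightarrow> 's \<Rightarrow> real) \<Rightarrow> ('s \<Rightarrow> real) \<Rightarrow> 's set
    \<Rightarrow> ('s \<Rightarrow> 'a \<Rightarrow> real) \<Rightarrow> 's \<Rightarrow> 'a \<Rightarrow> real" where
  "bellman P R Sbot Q s a =
     (\<Sum>s'\<in>UNIV. P s a s' * (R s' + (if s' \<notin> Sbot then Max (range (Q s')) else 0)))"

definition lagrangian where
  "lagrangian P R Sbot s0 \<pi> Q lam =
     terminal_value P Sbot s0 \<pi> Q +
     (\<Sum>s\<in>UNIV. \<Sum>a\<in>UNIV. lam s a * (bellman P R Sbot Q s a - Q s a))"

end

theory Submission
  imports Defs
begin

lemma kern_nonneg: "is_kernel P \<Longrightarrow> 0 \<le> P s a s'"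
  by (simp add: is_kernel_def is_distr_def)
lemma kern_sum: "is_kernel P \<Longrightarrow> (\<Sum>s'\<in>UNIV. P s a s') = 1"
  by (simp add: is_kernel_def is_distr_def)
lemma pol_nonneg: "is_policy \<pi> \<Longrightarrow> 0 \<le> \<pi> s a"
  by (simp add: is_policy_def is_distr_def)
lemma pol_sum: "is_policy \<pi> \<Longrightarrow> (\<Sum>a\<in>UNIV. \<pi> s a) = 1"
  by (simp add: is_policy_def is_distr_def)

lemma occ_nonneg:
  assumes "is_kernel P" "is_policy \<pi>"
  shows "0 \<le> occ P Sbot s0 \<pi> t s"
proof (induction t arbitrary: s)
  case 0 show ?case using kern_nonneg[OF assms(1)] pol_nonneg[OF assms(2)]
    by (auto intro!: sum_nonneg)
next
  case (Suc t) show ?case using kern_nonneg[OF assms(1)] pol_nonneg[OF assms(2)] Suc.IH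
    by (auto intro!: sum_nonneg)
qed

lemma sum_pos_ex: "(\<Sum>x\<in>A. f x) > (0::real) \<Longrightarrow> \<exists>x\<in>A. f x > 0"
  by (metis not_less sum_nonpos)

lemma occ_path:
  fixes P :: "'s::finite \<Rightarrow> 'a::finite \<Rightarrow> 's \<Rightarrow> real"
  assumes kP: "is_kernel P" and p1: "is_policy \<pi>" and p2: "is_policy \<pi>'"
    and s0K: "s0 \<notin> K" and pos: "\<forall>s a. s \<notin> K \<longrightarrow> 0 < \<pi>' s a"
  shows "occ P Sbot s0 \<pi> t s > 0 \<Longrightarrow>
    (\<exists>t' s'. s' \<in> K \<and> occ P Sbot s0 \<pi>' t' s' > 0) \<or> occ P Sbot s0 \<pi>' t s > 0"
proof (induction t arbitrary: s)
  case 0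
  then obtain a where "\<pi> s0 a * P s0 a s > 0"
    using sum_pos_ex[of "\<lambda>a. \<pi> s0 a * P s0 a s" UNIV] by auto
  then have "P s0 a s > 0"
    using pol_nonneg[OF p1, of s0 a] by (auto simp: zero_less_mult_iff)
  moreover have "\<pi>' s0 a > 0" using pos s0K by auto
  ultimately have "\<pi>' s0 a * P s0 a s > 0" by simp
  also have "\<pi>' s0 a * P s0 a s \<le> (\<Sum>a\<in>UNIV. \<pi>' s0 a * P s0 a s)"
    by (rule member_le_sum) (auto intro: mult_nonneg_nonneg pol_nonneg[OF p2] kern_nonneg[OF kP])
  finally show ?case by simp
next
  case (Suc t)
  from Suc.prems obtain s1 where s1: "s1 \<in> -Sbot"
    and "(\<Sum>a\<in>UNIV. occ P Sbot s0 \<pi> t s1 * \<pi> s1 a * P s1 a s) > 0"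
    using sum_pos_ex by fastforce
  then obtain a where "occ P Sbot s0 \<pi> t s1 * \<pi> s1 a * P s1 a s > 0"
    using sum_pos_ex by blast
  then have o1: "occ P Sbot s0 \<pi> t s1 > 0" and pp: "P s1 a s > 0"
    using pol_nonneg[OF p1] occ_nonneg[OF kP p1, of Sbot s0 t s1] kern_nonneg[OF kP, of s1 a s]
    by (auto simp: zero_less_mult_iff)
  from Suc.IH[OF o1] show ?case
  proof
    assume o2: "occ P Sbot s0 \<pi>' t s1 > 0"
    show ?case
    proof (cases "s1 \<in> K")
      case True then show ?thesis using o2 by blast
    next
      case False
      then have "\<pi>' s1 a > 0" using pos by auto
      then have "occ P Sbot s0 \<pi>' t s1 * \<pi>' s1 a * P s1 a s > 0" using o2 pp by simp
      also have "occ P Sbot s0 \<pi>' t s1 * \<pi>' s1 a * P s1 a s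
          \<le> (\<Sum>a\<in>UNIV. occ P Sbot s0 \<pi>' t s1 * \<pi>' s1 a * P s1 a s)"
        by (rule member_le_sum)
           (auto intro!: mult_nonneg_nonneg pol_nonneg[OF p2] kern_nonneg[OF kP] occ_nonneg[OF kP p2])
      also have "\<dots> \<le> (\<Sum>x\<in>-Sbot. \<Sum>a\<in>UNIV. occ P Sbot s0 \<pi>' t x * \<pi>' x a * P x a s)"
        by (rule member_le_sum[of s1 "-Sbot" "\<lambda>x. \<Sum>a\<in>UNIV. occ P Sbot s0 \<pi>' t x * \<pi>' x a * P x a s", OF s1])
           (auto intro!: sum_nonneg mult_nonneg_nonneg pol_nonneg[OF p2] kern_nonneg[OF kP] occ_nonneg[OF kP p2])
      finally show ?thesis by simp
    qed
  qed blast
qed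

lemma le_Qstar:
  fixes P :: "'s::finite \<Rightarrow> 'a::finite \<Rightarrow> 's \<Rightarrow> real"
  assumes elp: "ELP P R rho Sbot s0"
    and hfix: "bellman P R Sbot Qstar = Qstar"
    and hQ: "\<forall>s a. Q s a \<le> bellman P R Sbot Q s a"
  shows "Q s a \<le> Qstar s a"
proof -
  have kP: "is_kernel P" and rho: "is_distr rho" and s0S: "s0 \<in> Sbot"
    and fin: "\<And>\<pi>. is_policy \<pi> \<Longrightarrow> finite_expected_T P Sbot s0 \<pi>"
    and hterm: "\<And>s a s'. s \<in> Sbot \<Longrightarrow> P s a s' = rho s'"
    and reach: "\<And>s. reachable P Sbot s0 s"
    using elp unfolding ELP_def by auto
  define D where "D s a = Q s a - Qstar s a" for s a
  define M where "M s = Max (range (D s))" for s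
  define m where "m = Max (range M)"
  have DM: "D s a \<le> M s" for s a unfolding M_def by (rule Max_ge) auto
  have Mm: "M s \<le> m" for s unfolding m_def by (rule Max_ge) auto
  define f where "f s' = (if s' \<notin> Sbot then M s' else 0)" for s'
  have key: "D s a \<le> (\<Sum>s'\<in>UNIV. P s a s' * f s')" for s a
  proof -
    have mx: "(if s' \<notin> Sbot then Max (range (Q s')) else 0)
        - (if s' \<notin> Sbot then Max (range (Qstar s')) else 0) \<le> f s'" for s'
    proof (cases "s' \<in> Sbot")
      case False
      have "Max (range (Q s')) \<le> Max (range (Qstar s')) + M s'"
      proof -
        have "Q s' b \<le> Max (range (Qstar s')) + M s'" for b
        proof -
          have "Qstar s' b \<le> Max (range (Qstar s'))" by (rule Max_ge) auto
          then show ?thesis using DM[of s' b] unfolding D_def by linarith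
        qed
        then show ?thesis by (subst Max_le_iff) auto
      qed
      then show ?thesis using False unfolding f_def by (simp del: Max_le_iff)
    qed (simp add: f_def)
    have "D s a \<le> bellman P R Sbot Q s a - bellman P R Sbot Qstar s a"
      using hQ hfix unfolding D_def by (metis diff_right_mono)
    also have "\<dots> = (\<Sum>s'\<in>UNIV. P s a s' * ((if s' \<notin> Sbot then Max (range (Q s')) else 0)
        - (if s' \<notin> Sbot then Max (range (Qstar s')) else 0)))"
      unfolding bellman_def sum_subtractf[symmetric] by (rule sum.cong) (auto simp: algebra_simps)
    also have "\<dots> \<le> (\<Sum>s'\<in>UNIV. P s a s' * f s')"
      by (rule sum_mono, rule mult_left_mono[OF mx kern_nonneg[OF kP]])
    finally show ?thesis .
  qed
  have "m \<le> 0"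
  proof (rule ccontr)
    assume "\<not> m \<le> 0"
    then have mpos: "m > 0" by simp
    have "m \<in> range M" unfolding m_def by (rule Max_in) auto
    then obtain sK where sK: "M sK = m" by auto
    define K where "K = {s. M s = m}"
    have sKK: "sK \<in> K" using sK K_def by simp
    define act where "act s = (SOME a. D s a = M s)" for s
    have act: "D s (act s) = M s" for s
    proof -
      have "M s \<in> range (D s)" unfolding M_def by (rule Max_in) auto
      then have "\<exists>a. D s a = M s" by auto
      then show ?thesis unfolding act_def by (rule someI_ex)
    qed
    have succ: "s' \<in> K \<and> s' \<notin> Sbot" if sk: "s \<in> K" and pp: "P s (act s) s' > 0" for s s'
    proof -
      have fm: "f x \<le> m" for x using Mm[of x] mpos unfolding f_def by auto
      have "m \<le> (\<Sum>x\<in>UNIV. P s (act s) x * f x)" using key[of s "act s"] act[of s] sk K_def by simp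
      then have "(\<Sum>x\<in>UNIV. P s (act s) x * (m - f x)) \<le> 0"
        using kern_sum[OF kP, of s "act s"]
        by (simp add: right_diff_distrib sum_subtractf sum_distrib_right[symmetric])
      moreover have nn: "\<forall>x\<in>UNIV. 0 \<le> P s (act s) x * (m - f x)"
        using fm kern_nonneg[OF kP] by (simp add: mult_nonneg_nonneg)
      ultimately have "(\<Sum>x\<in>UNIV. P s (act s) x * (m - f x)) = 0" by (meson antisym sum_nonneg)
      then have "P s (act s) s' * (m - f s') = 0" using nn by (simp add: sum_nonneg_eq_0_iff)
      then have "f s' = m" using pp by simp
      then show ?thesis using mpos unfolding f_def K_def by (auto split: if_splits)
    qed
    define \<pi>' where "\<pi>' s a = (if s \<in> K then (if a = act s then 1 else 0) else 1 / real CARD('a))" for s a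
    have pol': "is_policy \<pi>'"
      unfolding is_policy_def is_distr_def
    proof (intro allI conjI)
      fix s
      show "(\<Sum>a\<in>UNIV. \<pi>' s a) = 1"
      proof (cases "s \<in> K")
        case True then show ?thesis unfolding \<pi>'_def by (simp add: sum.delta)
      next
        case False then show ?thesis unfolding \<pi>'_def by simp
      qed
    qed (simp add: \<pi>'_def)
    have pos': "\<forall>s a. s \<notin> K \<longrightarrow> 0 < \<pi>' s a" unfolding \<pi>'_def by simp
    define g where "g t = (\<Sum>s\<in>K - Sbot. occ P Sbot s0 \<pi>' t s)" for t
    have onn: "0 \<le> occ P Sbot s0 \<pi>' t s" for t s by (rule occ_nonneg[OF kP pol'])
    have gmono: "g t \<le> g (Suc t)" for t
    proof -
      have inner: "(\<Sum>a\<in>UNIV. occ P Sbot s0 \<pi>' t x * \<pi>' x a * P x a y)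
          = occ P Sbot s0 \<pi>' t x * P x (act x) y" if "x \<in> K" for x y
      proof -
        have "(\<Sum>a\<in>UNIV. occ P Sbot s0 \<pi>' t x * \<pi>' x a * P x a y)
           = (\<Sum>a\<in>UNIV. if a = act x then occ P Sbot s0 \<pi>' t x * P x a y else 0)"
          by (rule sum.cong) (auto simp: \<pi>'_def that)
        then show ?thesis by (simp add: sum.delta')
      qed
      have tot: "(\<Sum>y\<in>K - Sbot. P x (act x) y) = 1" if "x \<in> K" for x
      proof -
        have "(\<Sum>y\<in>K - Sbot. P x (act x) y) = (\<Sum>y\<in>UNIV. P x (act x) y)"
        proof (rule sum.mono_neutral_left)
          show "\<forall>y\<in>UNIV - (K - Sbot). P x (act x) y = 0"
          proof
            fix y assume "y \<in> UNIV - (K - Sbot)"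
            then have "\<not> (y \<in> K \<and> y \<notin> Sbot)" by simp
            then have "\<not> P x (act x) y > 0" using succ[OF that, of y] by blast
            then show "P x (act x) y = 0" using kern_nonneg[OF kP, of x "act x" y] by linarith
          qed
        qed auto
        then show ?thesis using kern_sum[OF kP] by simp
      qed
      have "g t = (\<Sum>x\<in>K - Sbot. occ P Sbot s0 \<pi>' t x * (\<Sum>y\<in>K - Sbot. P x (act x) y))"
        unfolding g_def
      proof (rule sum.cong[OF refl])
        fix x assume "x \<in> K - Sbot"
        then have "x \<in> K" by blast
        from tot[OF this] show "occ P Sbot s0 \<pi>' t x = occ P Sbot s0 \<pi>' t x * (\<Sum>y\<in>K - Sbot. P x (act x) y)"
          by simp
      qed
      also have "\<dots> = (\<Sum>y\<in>K - Sbot. \<Sum>x\<in>K - Sbot. occ P Sbot s0 \<pi>' t x * P x (act x) y)"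
        unfolding sum_distrib_left by (rule sum.swap)
      also have "\<dots> = (\<Sum>y\<in>K - Sbot. \<Sum>x\<in>K - Sbot. \<Sum>a\<in>UNIV. occ P Sbot s0 \<pi>' t x * \<pi>' x a * P x a y)"
        by (rule sum.cong[OF refl], rule sum.cong[OF refl], simp add: inner)
      also have "\<dots> \<le> (\<Sum>y\<in>K - Sbot. \<Sum>x\<in>- Sbot. \<Sum>a\<in>UNIV. occ P Sbot s0 \<pi>' t x * \<pi>' x a * P x a y)"
        by (rule sum_mono, rule sum_mono2)
           (auto intro!: sum_nonneg mult_nonneg_nonneg simp: onn pol_nonneg[OF pol'] kern_nonneg[OF kP])
      also have "\<dots> = g (Suc t)" unfolding g_def by simp
      finally show ?thesis .
    qed
    have gmono': "g t0 \<le> g (t0 + n)" for t0 n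
      by (induction n) (auto intro: order_trans[OF _ gmono])
    have "\<exists>t0. g t0 > 0"
    proof (cases "K \<inter> Sbot = {}")
      case False
      then obtain s where s: "s \<in> K" "s \<in> Sbot" by auto
      have "(\<Sum>x\<in>UNIV. rho x) = 1" using rho unfolding is_distr_def by simp
      then obtain y where y: "rho y > 0"
        using sum_pos_ex[of rho UNIV] by auto
      have yK: "y \<in> K - Sbot" using succ[OF s(1), of y] hterm[OF s(2)] y by auto
      have "occ P Sbot s0 \<pi>' 0 y = rho y"
        using hterm[OF s0S] pol_sum[OF pol'] by (simp add: sum_distrib_right[symmetric])
      then have "occ P Sbot s0 \<pi>' 0 y > 0" using y by simp
      also have "occ P Sbot s0 \<pi>' 0 y \<le> g 0"
        unfolding g_def by (rule member_le_sum[OF yK]) (simp_all only: onn finite)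
      finally show ?thesis by blast
    next
      case True
      then have "sK \<noteq> s0" using sKK s0S by auto
      then obtain \<pi> t where p: "is_policy \<pi>" "occ P Sbot s0 \<pi> t sK > 0"
        using reach[of sK] unfolding reachable_def by auto
      have "s0 \<notin> K" using True s0S by auto
      from occ_path[OF kP p(1) pol' this pos' p(2)]
      obtain t' s' where "s' \<in> K" "occ P Sbot s0 \<pi>' t' s' > 0" using sKK by blast
      moreover have "s' \<in> K - Sbot" using True \<open>s' \<in> K\<close> by auto
      ultimately have "0 < g t'"
        using member_le_sum[of s' "K - Sbot" "occ P Sbot s0 \<pi>' t'"] onn unfolding g_def by fastforce
      then show ?thesis by blast
    qed
    then obtain t0 where t0: "g t0 > 0" by blast
    have "summable (\<lambda>t. \<Sum>s\<in>UNIV. occ P Sbot s0 \<pi>' t s)"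
      using fin[OF pol'] unfolding finite_expected_T_def .
    then have "(\<lambda>t. \<Sum>s\<in>UNIV. occ P Sbot s0 \<pi>' t s) \<longlonglongrightarrow> 0" by (rule summable_LIMSEQ_zero)
    then have "\<forall>\<^sub>F t in sequentially. (\<Sum>s\<in>UNIV. occ P Sbot s0 \<pi>' t s) < g t0"
      using t0 by (rule order_tendstoD(2))
    then obtain N where N: "\<And>t. t \<ge> N \<Longrightarrow> (\<Sum>s\<in>UNIV. occ P Sbot s0 \<pi>' t s) < g t0"
      by (auto simp: eventually_sequentially)
    have "g (t0 + N) \<le> (\<Sum>s\<in>UNIV. occ P Sbot s0 \<pi>' (t0 + N) s)"
      unfolding g_def by (rule sum_mono2) (auto intro: onn)
    then show False using N[of "t0 + N"] gmono'[of t0 N] by simp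
  qed
  then show ?thesis using DM[of s a] Mm[of s] unfolding D_def by simp
qed

theorem mainTheorem9:
  fixes P :: "'s::finite \<Rightarrow> 'a::finite \<Rightarrow> 's \<Rightarrow> real"
    and R rho :: "'s \<Rightarrow> real" and Sbot :: "'s set" and s0 :: 's
    and \<pi> Qstar :: "'s \<Rightarrow> 'a \<Rightarrow> real"
  assumes elp: "ELP P R rho Sbot s0"
    and hpol: "is_policy \<pi>"
    and hfix: "bellman P R Sbot Qstar = Qstar"
  shows "(\<forall>s a. Qstar s a \<le> bellman P R Sbot Qstar s a)
       \<and> (\<forall>Q. (\<forall>s a. Q s a \<le> bellman P R Sbot Q s a) \<longrightarrow>
              terminal_value P Sbot s0 \<pi> Q \<le> terminal_value P Sbot s0 \<pi> Qstar)
       \<and> (\<forall>Q. (INF lam\<in>{lam. \<forall>s a. 0 \<le> lam s a}. ereal (lagrangian P R Sbot s0 \<pi> Q lam))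
              \<le> (INF lam\<in>{lam. \<forall>s a. 0 \<le> lam s a}. ereal (lagrangian P R Sbot s0 \<pi> Qstar lam)))"
proof -
  have kP: "is_kernel P" and fin: "finite_expected_T P Sbot s0 \<pi>"
    using elp hpol unfolding ELP_def by auto
  have p1: "\<forall>s a. Qstar s a \<le> bellman P R Sbot Qstar s a" using hfix by simp
  have hp: "0 \<le> hit_prob P Sbot s0 \<pi> s" for s
  proof -
    have sm: "summable (\<lambda>t. \<Sum>s\<in>UNIV. occ P Sbot s0 \<pi> t s)"
      using fin unfolding finite_expected_T_def .
    have "summable (\<lambda>t. occ P Sbot s0 \<pi> t s)"
    proof (rule summable_comparison_test'[OF sm])
      fix t
      have "occ P Sbot s0 \<pi> t s \<le> (\<Sum>s\<in>UNIV. occ P Sbot s0 \<pi> t s)"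
        by (rule member_le_sum) (simp_all only: occ_nonneg[OF kP hpol] finite UNIV_I)
      then show "norm (occ P Sbot s0 \<pi> t s) \<le> (\<Sum>s\<in>UNIV. occ P Sbot s0 \<pi> t s)"
        using occ_nonneg[OF kP hpol, of Sbot s0 t s] by simp
    qed
    then show ?thesis unfolding hit_prob_def
      by (rule suminf_nonneg) (rule occ_nonneg[OF kP hpol])
  qed
  have mono: "terminal_value P Sbot s0 \<pi> Q \<le> terminal_value P Sbot s0 \<pi> Qstar"
    if hQ: "\<forall>s a. Q s a \<le> bellman P R Sbot Q s a" for Q
    unfolding terminal_value_def
  proof (rule sum_mono, rule mult_left_mono[OF _ hp], rule sum_mono, rule mult_left_mono)
    fix s a show "Q s a \<le> Qstar s a" by (rule le_Qstar[OF elp hfix hQ])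
    show "0 \<le> \<pi> s a" by (rule pol_nonneg[OF hpol])
  qed
  define S where "S = {lam :: 's \<Rightarrow> 'a \<Rightarrow> real. \<forall>s a. 0 \<le> lam s a}"
  define TV where "TV = terminal_value P Sbot s0 \<pi> Qstar"
  have Lstar: "lagrangian P R Sbot s0 \<pi> Qstar lam = TV" for lam
    unfolding lagrangian_def TV_def using hfix by simp
  have infstar: "(INF lam\<in>S. ereal (lagrangian P R Sbot s0 \<pi> Qstar lam)) = ereal TV"
  proof -
    have "(\<lambda>s a. 0) \<in> S" unfolding S_def by simp
    then have "S \<noteq> {}" by blast
    then show ?thesis by (simp add: Lstar)
  qed
  have p3: "(INF lam\<in>S. ereal (lagrangian P R Sbot s0 \<pi> Q lam)) \<le> ereal TV" for Q
  proof -
    have "\<exists>lam\<in>S. lagrangian P R Sbot s0 \<pi> Q lam \<le> TV"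
    proof (cases "\<forall>s a. Q s a \<le> bellman P R Sbot Q s a")
      case True
      have "lagrangian P R Sbot s0 \<pi> Q (\<lambda>s a. 0) = terminal_value P Sbot s0 \<pi> Q"
        unfolding lagrangian_def by simp
      then show ?thesis using mono[OF True] unfolding S_def TV_def
        by (intro bexI[of _ "\<lambda>s a. 0"]) auto
    next
      case False
      then obtain s1 a1 where "Q s1 a1 > bellman P R Sbot Q s1 a1" by (auto simp: not_le)
      define \<delta> where "\<delta> = bellman P R Sbot Q s1 a1 - Q s1 a1"
      have dneg: "\<delta> < 0" using \<open>Q s1 a1 > _\<close> unfolding \<delta>_def by simp
      define TQ where "TQ = terminal_value P Sbot s0 \<pi> Q"
      define c where "c = max 0 ((TQ - TV) / (- \<delta>))"
      define lam where "lam s a = (if s = s1 \<and> a = a1 then c else 0)" for s a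
      have "(\<Sum>s\<in>UNIV. \<Sum>a\<in>UNIV. lam s a * (bellman P R Sbot Q s a - Q s a)) = c * \<delta>"
      proof -
        have "(\<Sum>s\<in>UNIV. \<Sum>a\<in>UNIV. lam s a * (bellman P R Sbot Q s a - Q s a))
            = (\<Sum>s\<in>UNIV. if s = s1 then (\<Sum>a\<in>UNIV. if a = a1 then c * \<delta> else 0) else 0)"
        proof (rule sum.cong[OF refl])
          fix s
          have "(\<Sum>a\<in>UNIV. lam s a * (bellman P R Sbot Q s a - Q s a))
              = (\<Sum>a\<in>UNIV. if s = s1 then (if a = a1 then c * \<delta> else 0) else 0)"
            by (rule sum.cong[OF refl]) (auto simp: lam_def \<delta>_def)
          then show "(\<Sum>a\<in>UNIV. lam s a * (bellman P R Sbot Q s a - Q s a))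
              = (if s = s1 then (\<Sum>a\<in>UNIV. if a = a1 then c * \<delta> else 0) else 0)"
            by simp
        qed
        also have "\<dots> = c * \<delta>" by (simp add: sum.delta')
        finally show ?thesis .
      qed
      then have L: "lagrangian P R Sbot s0 \<pi> Q lam = TQ + c * \<delta>"
        unfolding lagrangian_def TQ_def by simp
      have "(TQ - TV) / (- \<delta>) \<le> c" unfolding c_def by simp
      then have "(TQ - TV) / (- \<delta>) * (- \<delta>) \<le> c * (- \<delta>)"
        using dneg by (intro mult_right_mono) auto
      then have "TQ - TV \<le> - c * \<delta>" using dneg by simp
      then have "TQ + c * \<delta> \<le> TV" by simp
      moreover have "lam \<in> S" unfolding S_def lam_def c_def by auto
      ultimately show ?thesis using L by (metis order_refl)
    qed
    then obtain lam where "lam \<in> S" "lagrangian P R Sbot s0 \<pi> Q lam \<le> TV" by blast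
    then show ?thesis by (intro INF_lower2[of lam]) auto
  qed
  show ?thesis using p1 mono p3 infstar unfolding S_def by auto
qed

end
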